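(* Let $R$ be the ring of integers of a number field, $\mathfrak a$ a fractional ideal of $R$, $\mathfrak p$ a nonzero prime of $R$ with completion $R_{\mathfrak p}$, uniformizer $\varpi$ and $\mathfrak aR_{\mathfrak p}=\varpi^kR_{\mathfrak p}$. Let $(V_{\mathfrak a})_{\mathfrak p}=\{ax^3+3bx^2y+3cxy^2+dy^3: a\in\varpi^kR_{\mathfrak p},b\in R_{\mathfrak p},c\in\varpi^{-k}R_{\mathfrak p},d\in\varpi^{-2k}R_{\mathfrak p}\}$ with Haar measure $\mu$ normalized to give it volume $1$, and let $\mathcal P_{\mathfrak p}\subset(V_{\mathfrak a})_{\mathfrak p}$ be the set of forms for which $b^2-ac$, $\varpi^k(ad-bc)$, $\varpi^{2k}(c^2-bd)$ do not all lie in $\mathfrak pR_{\mathfrak p}$. Then $\mu(\mathcal P_{\mathfrak p})=1-N(\mathfrak p)^{-2}$.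
   Context: $N(\mathfrak p)=\#R/\mathfrak p$. $\mathcal P_{\mathfrak p}$ is the $\mathfrak p$-adic closure of the set of projective forms in $V_{\mathfrak a}$, where $f=ax^3+3bx^2y+3cxy^2+dy^3\in V_{\mathfrak a}$ is projective if no prime divides all of $(b^2-ac)R,(ad-bc)\mathfrak a,(c^2-bd)\mathfrak a^2$. *)

theory Defs
  imports "HOL-Analysis.Analysis"
begin

text \<open>Abstract model of the completion: a field K (the type 'k, of characteristic 0),
  its valuation ring R (a subset), a uniformizer w. A binary form
  a x^3 + 3 b x^2 y + 3 c x y^2 + d y^3 is identified with its coefficient tuple (a,b,c,d).\<close>

type_synonym 'k form4 = "'k \<times> 'k \<times> 'k \<times> 'k"

definition ideal_pow :: "'k::field set \<Rightarrow> 'k \<Rightarrow> int \<Rightarrow> 'k set" where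
  "ideal_pow R w n = {w powi n * x | x. x \<in> R}"

definition residue_classes :: "'k::field set \<Rightarrow> 'k \<Rightarrow> 'k set set" where
  "residue_classes R w = (\<lambda>x. {y \<in> R. y - x \<in> ideal_pow R w 1}) ` R"

definition complete_dvr :: "'k::field set \<Rightarrow> 'k \<Rightarrow> nat \<Rightarrow> bool" where
  "complete_dvr R w q \<longleftrightarrow>
     0 \<in> R \<and> 1 \<in> R \<and> (\<forall>x\<in>R. \<forall>y\<in>R. x + y \<in> R \<and> - x \<in> R \<and> x * y \<in> R)
   \<and> w \<in> R \<and> w \<noteq> 0 \<and> inverse w \<notin> R
   \<and> (\<forall>x. x \<noteq> 0 \<longrightarrow> (\<exists>u n. u \<in> R \<and> inverse u \<in> R \<and> x = u * w powi n))
   \<and> finite (residue_classes R w) \<and> card (residue_classes R w) = q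
   \<and> (\<forall>s :: nat \<Rightarrow> 'k. (\<forall>i. s i \<in> R) \<longrightarrow>
        (\<forall>m::nat. \<exists>N. \<forall>i\<ge>N. \<forall>j\<ge>N. s i - s j \<in> ideal_pow R w (int m)) \<longrightarrow>
        (\<exists>y\<in>R. \<forall>m::nat. \<exists>N. \<forall>i\<ge>N. y - s i \<in> ideal_pow R w (int m)))"

definition Vloc :: "'k::field set \<Rightarrow> 'k \<Rightarrow> int \<Rightarrow> 'k form4 set" where
  "Vloc R w k = {(a, b, c, d). a \<in> ideal_pow R w k \<and> b \<in> R \<and>
                 c \<in> ideal_pow R w (- k) \<and> d \<in> ideal_pow R w (- 2 * k)}"

definition Ploc :: "'k::field set \<Rightarrow> 'k \<Rightarrow> int \<Rightarrow> 'k form4 set" where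
  "Ploc R w k = {(a, b, c, d) \<in> Vloc R w k.
      \<not> (b\<^sup>2 - a * c \<in> ideal_pow R w 1 \<and>
         w powi k * (a * d - b * c) \<in> ideal_pow R w 1 \<and>
         w powi (2 * k) * (c\<^sup>2 - b * d) \<in> ideal_pow R w 1)}"

definition add4 :: "'k::field form4 \<Rightarrow> 'k form4 \<Rightarrow> 'k form4" where
  "add4 v x = (case v of (a, b, c, d) \<Rightarrow> case x of (a', b', c', d') \<Rightarrow>
                 (a + a', b + b', c + c', d + d'))"

definition nbhd4 :: "'k::field set \<Rightarrow> 'k \<Rightarrow> 'k form4 \<Rightarrow> nat \<Rightarrow> 'k form4 set" where
  "nbhd4 R w x n = {y. \<exists>z1 z2 z3 z4. z1 \<in> ideal_pow R w (int n) \<and> z2 \<in> ideal_pow R w (int n)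
       \<and> z3 \<in> ideal_pow R w (int n) \<and> z4 \<in> ideal_pow R w (int n) \<and> y = add4 x (z1, z2, z3, z4)}"

definition adic_open4 :: "'k::field set \<Rightarrow> 'k \<Rightarrow> 'k form4 set \<Rightarrow> bool" where
  "adic_open4 R w U \<longleftrightarrow> (\<forall>x\<in>U. \<exists>n. nbhd4 R w x n \<subseteq> U)"

definition borel_V :: "'k::field set \<Rightarrow> 'k \<Rightarrow> int \<Rightarrow> 'k form4 set set" where
  "borel_V R w k = sigma_sets (Vloc R w k) {U \<inter> Vloc R w k | U. adic_open4 R w U}"

definition haar_prob_V :: "'k::field set \<Rightarrow> 'k \<Rightarrow> int \<Rightarrow> 'k form4 measure \<Rightarrow> bool" where
  "haar_prob_V R w k \<mu> \<longleftrightarrow>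
     space \<mu> = Vloc R w k \<and> sets \<mu> = borel_V R w k \<and> emeasure \<mu> (Vloc R w k) = 1 \<and>
     (\<forall>v\<in>Vloc R w k. \<forall>A\<in>sets \<mu>. emeasure \<mu> (add4 v ` A) = emeasure \<mu> A)"

end

theory Submission
  imports Defs
begin


locale cdvr =
  fixes R :: "'k::field_char_0 set" and w :: 'k and q :: nat
  assumes cd: "complete_dvr R w q"
begin

lemma R0: "0 \<in> R" and R1: "1 \<in> R" and Radd: "x \<in> R \<Longrightarrow> y \<in> R \<Longrightarrow> x + y \<in> R"
  and Rneg: "x \<in> R \<Longrightarrow> - x \<in> R" and Rmul: "x \<in> R \<Longrightarrow> y \<in> R \<Longrightarrow> x * y \<in> R"
  and wR: "w \<in> R" and w0: "w \<noteq> 0" and winv: "inverse w \<notin> R"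
  and fact: "\<And>x. x \<noteq> 0 \<Longrightarrow> (\<exists>u n. u \<in> R \<and> inverse u \<in> R \<and> x = u * w powi n)"
  and finC: "finite (residue_classes R w)" and cardC: "card (residue_classes R w) = q"
  using cd unfolding complete_dvr_def by auto

lemma Rdiff: "x \<in> R \<Longrightarrow> y \<in> R \<Longrightarrow> x - y \<in> R"
  using Radd[of x "-y"] Rneg[of y] by simp

lemma Rpow: "x \<in> R \<Longrightarrow> x ^ n \<in> R"
  by (induction n) (auto intro: Rmul R1)

lemma Rpowi: "j \<ge> 0 \<Longrightarrow> w powi j \<in> R"
  using Rpow[OF wR] by (simp add: power_int_nonneg_exp)

lemma wpn: "w powi n \<noteq> 0" using w0 by simp

lemma inv_cancel: "(a::'k) \<noteq> 0 \<Longrightarrow> inverse a * (a * r) = r"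
  by (simp add: mult.assoc[symmetric])

lemma wpadd: "w powi (a + b) = w powi a * w powi b" using w0 by (simp add: power_int_add)

lemma ip_iff: "x \<in> ideal_pow R w n \<longleftrightarrow> w powi (-n) * x \<in> R"
proof
  assume "x \<in> ideal_pow R w n"
  then obtain r where "r \<in> R" "x = w powi n * r" unfolding ideal_pow_def by auto
  then show "w powi (-n) * x \<in> R" using wpn[of n] by (simp add: power_int_minus inv_cancel)
next
  assume "w powi (-n) * x \<in> R"
  moreover have "x = w powi n * (w powi (-n) * x)" using wpn[of n] by (simp add: power_int_minus mult.assoc[symmetric])
  ultimately show "x \<in> ideal_pow R w n" unfolding ideal_pow_def by blast
qed

lemma ip_mono: assumes "n' \<le> n" "x \<in> ideal_pow R w n" shows "x \<in> ideal_pow R w n'"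
proof -
  have e: "w powi (-n') = w powi (n - n') * w powi (-n)" using wpadd[of "n-n'" "-n"] by simp
  have "w powi (-n') * x = w powi (n - n') * (w powi (-n) * x)"
    by (simp add: e mult.assoc)
  moreover have "w powi (n - n') * (w powi (-n) * x) \<in> R"
    using assms ip_iff Rmul Rpowi[of "n - n'"] by simp
  ultimately show ?thesis using ip_iff by metis
qed

lemma ip_shift: assumes "x \<in> ideal_pow R w n" shows "w powi a * x \<in> ideal_pow R w (n + a)"
proof -
  have e: "w powi (-(n+a)) * w powi a = w powi (-n)"
    using wpadd[of "-(n+a)" a] by simp
  have "w powi (-(n+a)) * (w powi a * x) = w powi (-n) * x"
    by (metis e mult.assoc)
  then show ?thesis using assms ip_iff[of "w powi a * x" "n+a"] ip_iff[of x n] by metis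
qed

lemma ip0: "ideal_pow R w 0 = R"
  using ip_iff by auto

definition m where "m = ideal_pow R w 1"

lemma m_iff: "x \<in> m \<longleftrightarrow> inverse w * x \<in> R"
  unfolding m_def ip_iff by (simp add: power_int_minus)

lemma mR: "x \<in> m \<Longrightarrow> x \<in> R"
  using ip_mono[of 0 1 x] ip0 m_def by auto

lemma m0: "0 \<in> m" using m_iff R0 by simp
lemma madd: "x \<in> m \<Longrightarrow> y \<in> m \<Longrightarrow> x + y \<in> m"
  using m_iff Radd by (simp add: distrib_left)
lemma mneg: "x \<in> m \<Longrightarrow> - x \<in> m"
  using m_iff Rneg by simp
lemma mdiff: "x \<in> m \<Longrightarrow> y \<in> m \<Longrightarrow> x - y \<in> m"
  using madd[of x "-y"] mneg[of y] by simp
lemma mmul: "x \<in> m \<Longrightarrow> y \<in> R \<Longrightarrow> x * y \<in> m"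
  using m_iff Rmul by (metis mult.assoc)
lemma mmul': "x \<in> R \<Longrightarrow> y \<in> m \<Longrightarrow> x * y \<in> m"
  using mmul by (metis mult.commute)
lemma mw: "x \<in> R \<Longrightarrow> w * x \<in> m"
  using m_iff[of "w*x"] inv_cancel[OF w0, of x] by simp

lemma unit: assumes "x \<in> R" "x \<notin> m" shows "inverse x \<in> R"
proof -
  have "x \<noteq> 0" using assms m0 by auto
  then obtain u n where u: "u \<in> R" "inverse u \<in> R" "x = u * w powi n" using fact by blast
  have "u \<noteq> 0" using u \<open>x \<noteq> 0\<close> by auto
  consider "n \<ge> 1" | "n \<le> -1" | "n = 0" by linarith
  then show ?thesis
  proof cases
    case 1
    have "x = w * (u * w powi (n - 1))" using u w0
      by (simp add: power_int_diff field_simps)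
    then have "x \<in> m" using mw Rmul[OF u(1) Rpowi[of "n-1"]] 1 by simp
    then show ?thesis using assms by simp
  next
    case 2
    have "inverse w = x * inverse u * w powi (-n-1)" using u w0 \<open>u \<noteq> 0\<close>
      by (simp add: power_int_diff power_int_minus field_simps)
    then have "inverse w \<in> R" using Rmul[OF Rmul[OF assms(1) u(2)] Rpowi[of "-n-1"]] 2 by simp
    then show ?thesis using winv by simp
  next
    case 3 then show ?thesis using u by simp
  qed
qed

lemma mprime: assumes "x \<in> R" "y \<in> R" "x * y \<in> m" shows "x \<in> m \<or> y \<in> m"
proof (rule ccontr)
  assume nn: "\<not> (x \<in> m \<or> y \<in> m)"
  then have "inverse x * (x * y) \<in> m" using unit[of x] assms mmul' by auto
  moreover have "x \<noteq> 0" using nn m0 by auto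
  then have "inverse x * (x * y) = y" by (rule inv_cancel)
  ultimately show False using nn by simp
qed


definition cl where "cl x = {y \<in> R. y - x \<in> m}"

lemma C_def: "residue_classes R w = cl ` R"
  unfolding residue_classes_def cl_def m_def by simp

lemma mem_cl: "y \<in> cl x \<longleftrightarrow> y \<in> R \<and> y - x \<in> m" unfolding cl_def by simp

lemma cl_self: "x \<in> R \<Longrightarrow> x \<in> cl x" using mem_cl m0 by simp

lemma cl_eq: assumes "x \<in> R" "y \<in> R" shows "cl x = cl y \<longleftrightarrow> x - y \<in> m"
proof
  assume "cl x = cl y" then show "x - y \<in> m" using cl_self[OF assms(1)] mem_cl by auto
next
  assume h: "x - y \<in> m"
  have "z - x \<in> m \<longleftrightarrow> z - y \<in> m" for z
    using madd[OF _ h, of "z - x"] mdiff[OF _ h, of "z - y"] by (auto simp: algebra_simps)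
  then show "cl x = cl y" unfolding cl_def by auto
qed

lemma cl_of_mem: assumes "x \<in> R" "z \<in> cl x" shows "cl z = cl x"
  using assms cl_eq mem_cl by auto

lemma cl_trans: assumes "x \<in> R" shows "cl x = (\<lambda>e. x + e) ` cl 0"
proof
  show "cl x \<subseteq> (\<lambda>e. x + e) ` cl 0"
  proof
    fix y assume "y \<in> cl x"
    then have "y - x \<in> cl 0" using mem_cl mR by auto
    then show "y \<in> (\<lambda>e. x + e) ` cl 0" by (rule rev_image_eqI) simp
  qed
  show "(\<lambda>e. x + e) ` cl 0 \<subseteq> cl x" using assms by (auto simp: mem_cl Radd)
qed

lemma cong_mul: assumes "x \<in> R" "y' \<in> R" "x - x' \<in> m" "y - y' \<in> m"
  shows "x * y - x' * y' \<in> m"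
proof -
  have "x * y - x' * y' = x * (y - y') + (x - x') * y'" by (simp add: algebra_simps)
  then show ?thesis using madd[OF mmul'[OF assms(1) assms(4)] mmul[OF assms(3) assms(2)]] by simp
qed

lemma cong_m: "u - u' \<in> m \<Longrightarrow> u \<in> m \<longleftrightarrow> u' \<in> m"
  using mdiff[of u "u - u'"] madd[of "u - u'" u'] by auto

fun badR where "badR (a, b, c, d) \<longleftrightarrow> b\<^sup>2 - a * c \<in> m \<and> a * d - b * c \<in> m \<and> c\<^sup>2 - b * d \<in> m"

lemma badR_cong:
  assumes R: "a \<in> R" "b \<in> R" "c \<in> R" "d \<in> R" "a' \<in> R" "b' \<in> R" "c' \<in> R" "d' \<in> R"
  and m: "a - a' \<in> m" "b - b' \<in> m" "c - c' \<in> m" "d - d' \<in> m"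
  shows "badR (a, b, c, d) \<longleftrightarrow> badR (a', b', c', d')"
proof -
  have "(b\<^sup>2 - a * c) - (b'\<^sup>2 - a' * c') = (b * b - b' * b') - (a * c - a' * c')"
    by (simp add: power2_eq_square)
  then have 1: "(b\<^sup>2 - a * c) - (b'\<^sup>2 - a' * c') \<in> m"
    using mdiff cong_mul R m by metis
  have "(a * d - b * c) - (a' * d' - b' * c') = (a * d - a' * d') - (b * c - b' * c')"
    by simp
  then have 2: "(a * d - b * c) - (a' * d' - b' * c') \<in> m"
    using mdiff cong_mul R m by metis
  have "(c\<^sup>2 - b * d) - (c'\<^sup>2 - b' * d') = (c * c - c' * c') - (b * d - b' * d')"
    by (simp add: power2_eq_square)
  then have 3: "(c\<^sup>2 - b * d) - (c'\<^sup>2 - b' * d') \<in> m"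
    using mdiff cong_mul R m by metis
  show ?thesis using cong_m[OF 1] cong_m[OF 2] cong_m[OF 3] by simp
qed


abbreviation "C \<equiv> cl ` R"

fun cl4 where "cl4 (a, b, c, d) = (cl a, cl b, cl c, cl d)"

definition "BadC = {X \<in> C \<times> C \<times> C \<times> C. \<exists>t \<in> R \<times> R \<times> R \<times> R. X = cl4 t \<and> badR t}"

definition "rep A = (SOME a. a \<in> A)"

lemma rep: assumes "A \<in> C" shows "rep A \<in> R" "cl (rep A) = A"
proof -
  obtain x where x: "x \<in> R" "A = cl x" using assms by auto
  then have "rep A \<in> A" unfolding rep_def using cl_self by (metis someI)
  then show "rep A \<in> R" "cl (rep A) = A" using x cl_of_mem mem_cl by auto
qed

lemma cl_in: "x \<in> R \<Longrightarrow> cl x \<in> C" by simp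

definition "g a b = (if a \<in> m then (0, 0, 0, b) else (a, b, b\<^sup>2 * inverse a, b ^ 3 * (inverse a)\<^sup>2))"

definition "H = (\<lambda>(A, B). cl4 (g (rep A) (rep B)))"

lemma g_R: assumes "a \<in> R" "b \<in> R" shows "g a b \<in> R \<times> R \<times> R \<times> R" "badR (g a b)"
proof -
  show "g a b \<in> R \<times> R \<times> R \<times> R"
  proof (cases "a \<in> m")
    case True then show ?thesis using assms R0 by (simp add: g_def)
  next
    case False
    then have "inverse a \<in> R" using unit assms by simp
    then show ?thesis using False assms by (simp add: g_def Rmul Rpow)
  qed
  show "badR (g a b)"
  proof (cases "a \<in> m")
    case True then show ?thesis using m0 by (simp add: g_def power2_eq_square)
  next
    case False
    then have "a \<noteq> 0" using m0 by auto
    then have z: "b\<^sup>2 - a * (b\<^sup>2 * inverse a) = 0" "a * (b ^ 3 * (inverse a)\<^sup>2) - b * (b\<^sup>2 * inverse a) = 0"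
       "(b\<^sup>2 * inverse a)\<^sup>2 - b * (b ^ 3 * (inverse a)\<^sup>2) = 0"
      by (simp_all add: field_simps power2_eq_square power3_eq_cube)
    have gq: "g a b = (a, b, b\<^sup>2 * inverse a, b ^ 3 * (inverse a)\<^sup>2)" using False by (simp add: g_def)
    show ?thesis unfolding gq badR.simps z using m0 by simp
  qed
qed

lemma H_in: assumes "A \<in> C" "B \<in> C" shows "H (A, B) \<in> BadC"
proof -
  obtain a b c d where t: "g (rep A) (rep B) = (a, b, c, d)" by (cases "g (rep A) (rep B)") auto
  have "(a, b, c, d) \<in> R \<times> R \<times> R \<times> R" "badR (a, b, c, d)"
    using g_R[OF rep(1)[OF assms(1)] rep(1)[OF assms(2)]] t by auto
  then show ?thesis unfolding BadC_def H_def using t by force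
qed

lemma H_inj: "inj_on H (C \<times> C)"
proof (rule inj_onI, clarify)
  fix a b a' b' assume R: "a \<in> R" "b \<in> R" "a' \<in> R" "b' \<in> R"
    and eq: "H (cl a, cl b) = H (cl a', cl b')"
  define a0 where "a0 = rep (cl a)"
  define b0 where "b0 = rep (cl b)"
  define a1 where "a1 = rep (cl a')"
  define b1 where "b1 = rep (cl b')"
  have r: "a0 \<in> R" "b0 \<in> R" "a1 \<in> R" "b1 \<in> R" "cl a0 = cl a" "cl b0 = cl b" "cl a1 = cl a'" "cl b1 = cl b'"
    using rep R unfolding a0_def b0_def a1_def b1_def by auto
  have eq2: "cl4 (g a0 b0) = cl4 (g a1 b1)" using eq unfolding H_def a0_def b0_def a1_def b1_def by simp
  show "cl a = cl a' \<and> cl b = cl b'"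
  proof (cases "a0 \<in> m"; cases "a1 \<in> m")
    assume h: "a0 \<in> m" "a1 \<in> m"
    then have "cl a0 = cl 0" "cl a1 = cl 0" using cl_eq[of a0 0] cl_eq[of a1 0] r R0 by auto
    moreover have "cl b0 = cl b1" using eq2 h by (simp add: g_def)
    ultimately have "cl a = cl 0" "cl a' = cl 0" "cl b = cl b'" using r by metis+
    then show ?thesis by simp
  next
    assume h: "a0 \<in> m" "a1 \<notin> m"
    then have "cl 0 = cl a1" using eq2 by (simp add: g_def)
    then have "0 - a1 \<in> m" using cl_eq[of 0 a1] r R0 by simp
    then have "a1 \<in> m" using mneg by fastforce
    then show ?thesis using h by simp
  next
    assume h: "a0 \<notin> m" "a1 \<in> m"
    then have "cl a0 = cl 0" using eq2 by (simp add: g_def)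
    then have "a0 \<in> m" using cl_eq[of a0 0] r R0 by simp
    then show ?thesis using h by simp
  next
    assume h: "a0 \<notin> m" "a1 \<notin> m"
    then have "cl a0 = cl a1" "cl b0 = cl b1" using eq2 by (simp_all add: g_def)
    then show ?thesis using r by simp
  qed
qed

lemma H_surj: assumes "X \<in> BadC" shows "X \<in> H ` (C \<times> C)"
proof -
  obtain a b c d where R: "a \<in> R" "b \<in> R" "c \<in> R" "d \<in> R" and X: "X = cl4 (a, b, c, d)"
    and bad: "badR (a, b, c, d)"
    using assms unfolding BadC_def by force
  show ?thesis
  proof (cases "a \<in> m")
    case True
    have "b * b \<in> m" using bad madd[OF _ mmul[OF True R(3)], of "b\<^sup>2 - a * c"]
      by (simp add: power2_eq_square)
    then have bm: "b \<in> m" using mprime R by auto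
    have "c * c \<in> m" using bad madd[OF _ mmul[OF bm R(4)], of "c\<^sup>2 - b * d"]
      by (simp add: power2_eq_square)
    then have cm: "c \<in> m" using mprime R by auto
    define a0 where "a0 = rep (cl 0)"
    define b0 where "b0 = rep (cl d)"
    have r: "a0 \<in> R" "b0 \<in> R" "cl a0 = cl 0" "cl b0 = cl d"
      using rep R R0 unfolding a0_def b0_def by auto
    have "a0 \<in> m" using r cl_eq R0 by auto
    have "H (cl 0, cl d) = cl4 (g a0 b0)" by (simp add: H_def a0_def b0_def)
    also have "\<dots> = (cl 0, cl 0, cl 0, cl d)"
      using r \<open>a0 \<in> m\<close> by (simp add: g_def)
    also have "\<dots> = X" using X True bm cm cl_eq R R0 mneg by auto
    finally show ?thesis using R R0 by force
  next
    case False
    define a0 where "a0 = rep (cl a)"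
    define b0 where "b0 = rep (cl b)"
    have r: "a0 \<in> R" "b0 \<in> R" "cl a0 = cl a" "cl b0 = cl b"
      using rep R unfolding a0_def b0_def by auto
    have "a0 - a \<in> m" "b0 - b \<in> m" using r cl_eq R by auto
    then have ma: "a - a0 \<in> m" "b - b0 \<in> m" using mneg by fastforce+
    have bad0: "badR (a0, b0, c, d)"
      using badR_cong[of a b c d a0 b0 c d] R r ma m0 bad by simp
    have a0m: "a0 \<notin> m" using cong_m[OF ma(1)] False by simp
    have ia: "inverse a0 \<in> R" using unit r a0m by simp
    have a00: "a0 \<noteq> 0" using a0m m0 by auto
    have e1: "c - b0\<^sup>2 * inverse a0 = - (inverse a0 * (b0\<^sup>2 - a0 * c))"
      using a00 by (simp add: field_simps)
    have c1: "c - b0\<^sup>2 * inverse a0 \<in> m"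
      unfolding e1 using bad0 ia by (simp add: mmul' mneg)
    have e2: "d - b0 ^ 3 * (inverse a0)\<^sup>2 = inverse a0 * (a0 * d - b0 * c) + (b0 * inverse a0) * (c - b0\<^sup>2 * inverse a0)"
      using a00 by (simp add: field_simps power2_eq_square power3_eq_cube)
    have c2: "d - b0 ^ 3 * (inverse a0)\<^sup>2 \<in> m"
      unfolding e2 using bad0 ia c1 r by (simp add: mmul' madd Rmul)
    have Rc: "b0\<^sup>2 * inverse a0 \<in> R" "b0 ^ 3 * (inverse a0)\<^sup>2 \<in> R"
      using r ia by (simp_all add: Rmul Rpow)
    have "H (cl a, cl b) = cl4 (g a0 b0)" by (simp add: H_def a0_def b0_def)
    also have "\<dots> = (cl a0, cl b0, cl (b0\<^sup>2 * inverse a0), cl (b0 ^ 3 * (inverse a0)\<^sup>2))"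
      using a0m by (simp add: g_def)
    also have "\<dots> = X" using X r cl_eq[OF R(3) Rc(1)] cl_eq[OF R(4) Rc(2)] c1 c2 by simp
    finally show ?thesis using R by force
  qed
qed

lemma card_C: "card C = q" "finite C" using cardC finC C_def by auto

lemma card_BadC: "card BadC = q * q" "finite BadC"
proof -
  have "bij_betw H (C \<times> C) BadC"
    unfolding bij_betw_def using H_inj H_surj H_in by blast
  then show "card BadC = q * q" "finite BadC"
    using bij_betw_same_card[of H "C \<times> C" BadC] card_C bij_betw_finite[of H "C \<times> C" BadC]
      card_cartesian_product[of C C] by auto
qed


end



locale cdvrk = cdvr R w q for R :: "'k::field_char_0 set" and w q +
  fixes k :: int
begin

fun phi :: "'k form4 \<Rightarrow> 'k form4" where "phi (a, b, c, d) = (w powi k * a, b, w powi (-k) * c, w powi (- 2 * k) * d)"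

abbreviation "R4 \<equiv> R \<times> R \<times> R \<times> R"

lemma ip_img: "ideal_pow R w n = (\<lambda>x. w powi n * x) ` R"
  unfolding ideal_pow_def by auto

lemma V_eq: "Vloc R w k = phi ` R4"
proof (rule set_eqI, rule iffI)
  fix x assume "x \<in> Vloc R w k"
  then obtain a b c d where x: "x = (a, b, c, d)" and h: "a \<in> ideal_pow R w k" "b \<in> R"
    "c \<in> ideal_pow R w (-k)" "d \<in> ideal_pow R w (- 2 * k)"
    unfolding Vloc_def by auto
  obtain a' where "a' \<in> R" "a = w powi k * a'" using h(1) unfolding ideal_pow_def by blast
  moreover obtain c' where "c' \<in> R" "c = w powi (-k) * c'" using h(3) unfolding ideal_pow_def by blast
  moreover obtain d' where "d' \<in> R" "d = w powi (- 2 * k) * d'" using h(4) unfolding ideal_pow_def by blast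
  ultimately have "x = phi (a', b, c', d')" "(a', b, c', d') \<in> R4" using x h by auto
  then show "x \<in> phi ` R4" by blast
next
  fix x assume "x \<in> phi ` R4"
  then obtain t where t: "t \<in> R4" "x = phi t" by blast
  obtain a b c d where "t = (a, b, c, d)" by (cases t) auto
  then have "x = phi (a, b, c, d)" "a \<in> R" "b \<in> R" "c \<in> R" "d \<in> R" using t by auto
  then show "x \<in> Vloc R w k" unfolding Vloc_def ideal_pow_def by auto
qed

lemma phi_inj: "inj phi"
proof (rule injI)
  fix s t :: "'k form4" assume "phi s = phi t"
  then show "s = t" using wpn
    by (cases s; cases t) (simp add: w0)
qed

lemma phi_add: "phi (add4 s t) = add4 (phi s) (phi t)"
  by (cases s; cases t) (simp add: add4_def algebra_simps)

lemma pk: "w powi k * w powi (-k) = 1" "w powi k * w powi k * w powi (- 2 * k) = 1"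
  "w powi (2 * k) * (w powi (-k) * w powi (-k)) = 1" "w powi (2 * k) * w powi (- 2 * k) = 1"
  "w powi (-k) * w powi k = 1" "w powi (- 2 * k) * w powi (2 * k) = 1"
proof -
  have wprod: "w powi a * w powi b = 1" if "b = -a" for a b
  proof -
    have "w powi a \<noteq> 0" by (rule wpn)
    then show ?thesis unfolding that power_int_minus by (rule right_inverse)
  qed
  have e0: "2 * k = k + k" by simp
  have s1: "w powi k * w powi k = w powi (2 * k)" by (simp only: e0 wpadd)
  have e: "- 2 * k = -k + -k" by simp
  have s2: "w powi (-k) * w powi (-k) = w powi (- 2 * k)" by (simp only: e wpadd)
  show "w powi k * w powi (-k) = 1" "w powi k * w powi k * w powi (- 2 * k) = 1"
  "w powi (2 * k) * (w powi (-k) * w powi (-k)) = 1" "w powi (2 * k) * w powi (- 2 * k) = 1"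
  "w powi (-k) * w powi k = 1" "w powi (- 2 * k) * w powi (2 * k) = 1"
    unfolding s1 s2 by (rule wprod; simp)+
qed

lemma P_iff: assumes "t \<in> R4" shows "phi t \<in> Ploc R w k \<longleftrightarrow> \<not> badR t"
proof -
  obtain a b c d where t: "t = (a, b, c, d)" by (cases t) auto
  have e1: "b\<^sup>2 - w powi k * a * (w powi (-k) * c) = b\<^sup>2 - a * c"
  proof -
    have "b\<^sup>2 - w powi k * a * (w powi (-k) * c) = b\<^sup>2 - (w powi k * w powi (-k)) * a * c"
      by (simp add: algebra_simps)
    then show ?thesis using pk by simp
  qed
  have e2: "w powi k * (w powi k * a * (w powi (- 2 * k) * d) - b * (w powi (-k) * c)) = a * d - b * c"
  proof -
    have "w powi k * (w powi k * a * (w powi (- 2 * k) * d) - b * (w powi (-k) * c))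
       = (w powi k * w powi k * w powi (- 2 * k)) * a * d - (w powi k * w powi (-k)) * b * c"
      by (simp add: algebra_simps)
    then show ?thesis using pk by simp
  qed
  have e3: "w powi (2 * k) * ((w powi (-k) * c)\<^sup>2 - b * (w powi (- 2 * k) * d)) = c\<^sup>2 - b * d"
  proof -
    have "w powi (2 * k) * ((w powi (-k) * c)\<^sup>2 - b * (w powi (- 2 * k) * d))
       = (w powi (2 * k) * (w powi (-k) * w powi (-k))) * c\<^sup>2 - (w powi (2 * k) * w powi (- 2 * k)) * b * d"
      by (simp add: algebra_simps power2_eq_square)
    then show ?thesis using pk by simp
  qed
  have "phi t \<in> Vloc R w k" using V_eq assms by auto
  then show ?thesis unfolding t phi.simps Ploc_def mem_Collect_eq prod.case e1 e2 e3 badR.simps m_def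
    by simp
qed

definition "Blk = (\<lambda>(A1, A2, A3, A4). phi ` (A1 \<times> A2 \<times> A3 \<times> A4))"

abbreviation "C4 \<equiv> C \<times> C \<times> C \<times> C"

lemma Blk_sub: "X \<in> C4 \<Longrightarrow> Blk X \<subseteq> Vloc R w k"
  unfolding V_eq Blk_def using mem_cl by auto

lemma V_union: "Vloc R w k = (\<Union>X\<in>C4. Blk X)"
proof
  show "Vloc R w k \<subseteq> (\<Union>X\<in>C4. Blk X)"
  proof
    fix y assume "y \<in> Vloc R w k"
    then obtain t where t0: "t \<in> R4" "y = phi t" unfolding V_eq by blast
    obtain a b c d where tt: "t = (a, b, c, d)" by (cases t) auto
    have R: "a \<in> R" "b \<in> R" "c \<in> R" "d \<in> R" using t0 tt by auto
    then have "(a,b,c,d) \<in> cl a \<times> cl b \<times> cl c \<times> cl d" using cl_self by simp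
    then have "y \<in> phi ` (cl a \<times> cl b \<times> cl c \<times> cl d)" using t0(2) tt by blast
    then have "y \<in> Blk (cl a, cl b, cl c, cl d)" unfolding Blk_def by simp
    moreover have "(cl a, cl b, cl c, cl d) \<in> C4" using R by simp
    ultimately show "y \<in> (\<Union>X\<in>C4. Blk X)" by (rule UN_I[rotated])
  qed
  show "(\<Union>X\<in>C4. Blk X) \<subseteq> Vloc R w k" by (rule UN_least) (rule Blk_sub)
qed

lemma cl_disj: assumes "x \<in> R" "y \<in> R" "z \<in> cl x" "z \<in> cl y" shows "cl x = cl y"
  using cl_of_mem assms by metis

lemma Blk_disj: "disjoint_family_on Blk C4"
proof (unfold disjoint_family_on_def, intro ballI impI)
  fix X Y assume X: "X \<in> C4" and Y: "Y \<in> C4" and ne: "X \<noteq> Y"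
  obtain x1 x2 x3 x4 where R1: "x1 \<in> R" "x2 \<in> R" "x3 \<in> R" "x4 \<in> R"
    and Xe: "X = (cl x1, cl x2, cl x3, cl x4)" using X by auto
  obtain y1 y2 y3 y4 where R2: "y1 \<in> R" "y2 \<in> R" "y3 \<in> R" "y4 \<in> R"
    and Ye: "Y = (cl y1, cl y2, cl y3, cl y4)" using Y by auto
  show "Blk X \<inter> Blk Y = {}"
  proof (rule ccontr)
    assume "Blk X \<inter> Blk Y \<noteq> {}"
    then obtain u where u1: "u \<in> Blk X" and u2: "u \<in> Blk Y" by blast
    obtain s where s: "s \<in> cl x1 \<times> cl x2 \<times> cl x3 \<times> cl x4" "u = phi s" using u1 unfolding Blk_def Xe by auto
    obtain t where t: "t \<in> cl y1 \<times> cl y2 \<times> cl y3 \<times> cl y4" "u = phi t" using u2 unfolding Blk_def Ye by auto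
    have "s = t" using s t phi_inj by (metis injD)
    obtain s1 s2 s3 s4 where ss: "s = (s1, s2, s3, s4)" by (cases s) auto
    have "cl x1 = cl y1" using cl_disj[OF R1(1) R2(1), of s1] s t ss \<open>s = t\<close> by auto
    moreover have "cl x2 = cl y2" using cl_disj[OF R1(2) R2(2), of s2] s t ss \<open>s = t\<close> by auto
    moreover have "cl x3 = cl y3" using cl_disj[OF R1(3) R2(3), of s3] s t ss \<open>s = t\<close> by auto
    moreover have "cl x4 = cl y4" using cl_disj[OF R1(4) R2(4), of s4] s t ss \<open>s = t\<close> by auto
    ultimately show False using ne Xe Ye by simp
  qed
qed

lemma prod_img: "(\<lambda>e. x1 + e) ` A1 \<times> (\<lambda>e. x2 + e) ` A2 \<times> (\<lambda>e. x3 + e) ` A3 \<times> (\<lambda>e. x4 + e) ` A4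
   = add4 (x1, x2, x3, x4) ` (A1 \<times> A2 \<times> A3 \<times> A4)"
proof (rule set_eqI, rule iffI)
  fix p assume "p \<in> (\<lambda>e. x1 + e) ` A1 \<times> (\<lambda>e. x2 + e) ` A2 \<times> (\<lambda>e. x3 + e) ` A3 \<times> (\<lambda>e. x4 + e) ` A4"
  then obtain e1 e2 e3 e4 where "e1 \<in> A1" "e2 \<in> A2" "e3 \<in> A3" "e4 \<in> A4"
    "p = (x1 + e1, x2 + e2, x3 + e3, x4 + e4)" by blast
  then show "p \<in> add4 (x1, x2, x3, x4) ` (A1 \<times> A2 \<times> A3 \<times> A4)"
    by (intro rev_image_eqI[of "(e1, e2, e3, e4)"]) (auto simp: add4_def)
next
  fix p assume "p \<in> add4 (x1, x2, x3, x4) ` (A1 \<times> A2 \<times> A3 \<times> A4)"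
  then obtain e where e: "e \<in> A1 \<times> A2 \<times> A3 \<times> A4" "p = add4 (x1, x2, x3, x4) e" by blast
  obtain e1 e2 e3 e4 where "e = (e1, e2, e3, e4)" by (cases e) auto
  then show "p \<in> (\<lambda>e. x1 + e) ` A1 \<times> (\<lambda>e. x2 + e) ` A2 \<times> (\<lambda>e. x3 + e) ` A3 \<times> (\<lambda>e. x4 + e) ` A4"
    using e by (auto simp: add4_def)
qed

lemma Blk_trans: assumes "x \<in> R4"
  shows "Blk (cl4 x) = add4 (phi x) ` Blk (cl 0, cl 0, cl 0, cl 0)"
proof -
  obtain x1 x2 x3 x4 where x: "x = (x1, x2, x3, x4)" by (cases x) auto
  have c: "cl x1 = (\<lambda>e. x1 + e) ` cl 0" "cl x2 = (\<lambda>e. x2 + e) ` cl 0"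
     "cl x3 = (\<lambda>e. x3 + e) ` cl 0" "cl x4 = (\<lambda>e. x4 + e) ` cl 0"
    using cl_trans assms x by auto
  have "Blk (cl4 x) = phi ` add4 x ` (cl 0 \<times> cl 0 \<times> cl 0 \<times> cl 0)"
    unfolding Blk_def x cl4.simps c using prod_img[of x1 "cl 0" x2 "cl 0" x3 "cl 0" x4 "cl 0"] by simp
  also have "\<dots> = add4 (phi x) ` phi ` (cl 0 \<times> cl 0 \<times> cl 0 \<times> cl 0)"
    unfolding image_image phi_add by simp
  finally show ?thesis unfolding Blk_def by simp
qed

lemma cl_addm: assumes "z \<in> cl x" "e \<in> m" shows "z + e \<in> cl x"
proof -
  have e: "z + e - x = (z - x) + e" by simp
  have "z \<in> R" "z - x \<in> m" using assms mem_cl by auto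
  then have "z + e \<in> R" "z + e - x \<in> m" unfolding e using assms madd Radd mR by auto
  then show ?thesis using mem_cl by auto
qed

lemma Blk_open: assumes "X \<in> C4" shows "adic_open4 R w (Blk X)"
  unfolding adic_open4_def
proof
  fix y assume y: "y \<in> Blk X"
  obtain x1 x2 x3 x4 where Xe: "X = (cl x1, cl x2, cl x3, cl x4)" using assms by auto
  obtain t where t: "t \<in> cl x1 \<times> cl x2 \<times> cl x3 \<times> cl x4" "y = phi t" using y unfolding Blk_def Xe by auto
  obtain t1 t2 t3 t4 where tt: "t = (t1, t2, t3, t4)" by (cases t) auto
  define n where "n = nat (2 * \<bar>k\<bar> + 1)"
  have n: "int n = 2 * \<bar>k\<bar> + 1" unfolding n_def by simp
  show "\<exists>n. nbhd4 R w y n \<subseteq> Blk X"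
  proof (intro exI[of _ n] subsetI)
    fix u assume "u \<in> nbhd4 R w y n"
    then obtain z1 z2 z3 z4 where z: "z1 \<in> ideal_pow R w (int n)" "z2 \<in> ideal_pow R w (int n)"
      "z3 \<in> ideal_pow R w (int n)" "z4 \<in> ideal_pow R w (int n)" and u: "u = add4 y (z1, z2, z3, z4)"
      unfolding nbhd4_def by blast
    define s where "s = (w powi (-k) * z1, z2, w powi k * z3, w powi (2 * k) * z4)"
    have "w powi k * (w powi (-k) * z1) = z1" using pk(1) by (simp add: mult.assoc[symmetric])
    moreover have "w powi (-k) * (w powi k * z3) = z3" using pk(5) by (simp add: mult.assoc[symmetric])
    moreover have "w powi (- 2 * k) * (w powi (2 * k) * z4) = z4" using pk(6) by (simp add: mult.assoc[symmetric])
    ultimately have ps: "phi s = (z1, z2, z3, z4)" unfolding s_def phi.simps by simp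
    have "w powi (-k) * z1 \<in> ideal_pow R w 1"
      using ip_mono[OF _ ip_shift[OF z(1), of "-k"]] n by simp
    moreover have "z2 \<in> ideal_pow R w 1"
      using ip_mono[OF _ z(2)] n by simp
    moreover have "w powi k * z3 \<in> ideal_pow R w 1"
      using ip_mono[OF _ ip_shift[OF z(3), of "k"]] n by simp
    moreover have "w powi (2 * k) * z4 \<in> ideal_pow R w 1"
      using ip_mono[OF _ ip_shift[OF z(4), of "2 * k"]] n by simp
    ultimately have sm: "w powi (-k) * z1 \<in> m" "z2 \<in> m" "w powi k * z3 \<in> m" "w powi (2 * k) * z4 \<in> m"
      unfolding m_def by auto
    have "u = phi (add4 t s)" unfolding u phi_add ps t(2) ..
    moreover have "add4 t s \<in> cl x1 \<times> cl x2 \<times> cl x3 \<times> cl x4"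
      using t(1) sm cl_addm unfolding tt s_def add4_def by auto
    ultimately show "u \<in> Blk X" unfolding Blk_def Xe by auto
  qed
qed

lemma Blk_bad: assumes "X \<in> BadC" "y \<in> Blk X" shows "y \<notin> Ploc R w k"
proof -
  obtain t0 where t0: "t0 \<in> R4" "X = cl4 t0" "badR t0" using assms(1) unfolding BadC_def by auto
  obtain a b c d where tt: "t0 = (a, b, c, d)" by (cases t0) auto
  obtain s where s: "s \<in> cl a \<times> cl b \<times> cl c \<times> cl d" "y = phi s" using assms(2) unfolding Blk_def t0(2) tt by auto
  obtain a' b' c' d' where ss: "s = (a', b', c', d')" by (cases s) auto
  have h: "a' \<in> R" "b' \<in> R" "c' \<in> R" "d' \<in> R" "a' - a \<in> m" "b' - b \<in> m" "c' - c \<in> m" "d' - d \<in> m"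
    using s(1) ss mem_cl by auto
  have "badR s" unfolding ss using badR_cong[of a' b' c' d' a b c d] h t0 tt by simp
  then show ?thesis using P_iff[of s] s ss h by simp
qed

lemma P_decomp: "Ploc R w k = Vloc R w k - (\<Union>X\<in>BadC. Blk X)"
proof
  show "Ploc R w k \<subseteq> Vloc R w k - (\<Union>X\<in>BadC. Blk X)"
    using Blk_bad unfolding Ploc_def by blast
  show "Vloc R w k - (\<Union>X\<in>BadC. Blk X) \<subseteq> Ploc R w k"
  proof
    fix y assume y: "y \<in> Vloc R w k - (\<Union>X\<in>BadC. Blk X)"
    then obtain t where t: "t \<in> R4" "y = phi t" unfolding V_eq by blast
    obtain a b c d where tt: "t = (a, b, c, d)" by (cases t) auto
    have R: "a \<in> R" "b \<in> R" "c \<in> R" "d \<in> R" using t tt by auto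
    have "\<not> badR t"
    proof
      assume "badR t"
      then have "cl4 t \<in> BadC" unfolding BadC_def using t tt by auto
      moreover have "(a,b,c,d) \<in> cl a \<times> cl b \<times> cl c \<times> cl d" using cl_self R by simp
      then have "y \<in> phi ` (cl a \<times> cl b \<times> cl c \<times> cl d)" using t(2) tt by blast
      then have "y \<in> Blk (cl4 t)" unfolding Blk_def tt by simp
      ultimately show False using y by blast
    qed
    then show "y \<in> Ploc R w k" using P_iff[OF t(1)] t(2) by simp
  qed
qed

end

theorem mainTheorem9:
  fixes R :: "'k::field_char_0 set" and w :: 'k and q :: nat and k :: int
    and \<mu> :: "'k form4 measure"
  assumes "complete_dvr R w q"
    and "haar_prob_V R w k \<mu>"
  shows "emeasure \<mu> (Ploc R w k) = ennreal (1 - 1 / (real q)\<^sup>2)"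
proof -
  interpret cdvrk R w q k by unfold_locales (rule assms(1))
  let ?V = "Vloc R w k"
  have sp: "space \<mu> = ?V" and st: "sets \<mu> = borel_V R w k" and tot: "emeasure \<mu> ?V = 1"
    and tr: "\<And>v A. v \<in> ?V \<Longrightarrow> A \<in> sets \<mu> \<Longrightarrow> emeasure \<mu> (add4 v ` A) = emeasure \<mu> A"
    using assms(2) unfolding haar_prob_V_def by auto
  have meas: "Blk X \<in> sets \<mu>" if "X \<in> C4" for X
  proof -
    have "Blk X = Blk X \<inter> ?V" using Blk_sub[OF that] by blast
    then have "Blk X \<in> {U \<inter> ?V | U. adic_open4 R w U}" using Blk_open[OF that] by blast
    then show ?thesis unfolding st borel_V_def by (rule sigma_sets.Basic)
  qed
  define B0 where "B0 = Blk (cl 0, cl 0, cl 0, cl 0)"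
  define e where "e = emeasure \<mu> B0"
  have C0: "(cl 0, cl 0, cl 0, cl 0) \<in> C4" using R0 by simp
  have eqm: "emeasure \<mu> (Blk X) = e" if XC: "X \<in> C4" for X
  proof -
    obtain x1 x2 x3 x4 where R: "x1 \<in> R" "x2 \<in> R" "x3 \<in> R" "x4 \<in> R"
      and Xe: "X = cl4 (x1, x2, x3, x4)" using XC by auto
    have x4: "(x1, x2, x3, x4) \<in> R4" using R by simp
    have "Blk X = add4 (phi (x1, x2, x3, x4)) ` B0" unfolding Xe B0_def by (rule Blk_trans[OF x4])
    moreover have "phi (x1, x2, x3, x4) \<in> ?V" unfolding V_eq using x4 by (rule imageI)
    ultimately show ?thesis unfolding e_def using tr meas[OF C0] B0_def by simp
  qed
  have finC4: "finite C4" using card_C by simp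
  have cC4: "card C4 = q * q * q * q" using card_C by (simp add: card_cartesian_product)
  have "emeasure \<mu> ?V = (\<Sum>X\<in>C4. emeasure \<mu> (Blk X))"
  proof -
    have "Blk ` C4 \<subseteq> sets \<mu>" by (rule image_subsetI) (rule meas)
    then show ?thesis unfolding V_union using sum_emeasure[OF _ Blk_disj finC4] by simp
  qed
  also have "\<dots> = (\<Sum>X\<in>C4. e)" by (rule sum.cong[OF refl]) (rule eqm)
  also have "\<dots> = of_nat (q * q * q * q) * e" using cC4 by simp
  finally have one: "of_nat (q * q * q * q) * e = 1" using tot by simp
  have BadC_sub: "BadC \<subseteq> C4" unfolding BadC_def by auto
  define Bad where "Bad = (\<Union>X\<in>BadC. Blk X)"
  have Bad_meas: "Bad \<in> sets \<mu>" unfolding Bad_def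
  proof (rule sets.finite_UN)
    show "finite BadC" by (rule card_BadC(2))
    fix X assume "X \<in> BadC"
    then show "Blk X \<in> sets \<mu>" using BadC_sub by (intro meas) (rule subsetD)
  qed
  have "emeasure \<mu> Bad = (\<Sum>X\<in>BadC. emeasure \<mu> (Blk X))"
  proof -
    have "Blk ` BadC \<subseteq> sets \<mu>" using BadC_sub by (intro image_subsetI meas) (rule subsetD)
    then show ?thesis unfolding Bad_def
      using sum_emeasure[OF _ disjoint_family_on_mono[OF BadC_sub Blk_disj] card_BadC(2)] by simp
  qed
  also have "\<dots> = (\<Sum>X\<in>BadC. e)" using BadC_sub by (intro sum.cong[OF refl] eqm) (rule subsetD)
  also have "\<dots> = of_nat (q * q) * e" using card_BadC(1) by simp
  finally have bad: "emeasure \<mu> Bad = of_nat (q * q) * e" .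
  have "cl 0 \<in> C" using R0 by simp
  then have "C \<noteq> {}" by blast
  then have "card C > 0" using card_C(2) by (simp add: card_gt_0_iff)
  then have qpos: "q > 0" using card_C(1) by simp
  have "e \<noteq> \<infinity>"
  proof
    assume "e = \<infinity>"
    then have "of_nat (q * q * q * q) * e = \<infinity>" using qpos by (simp add: ennreal_mult_eq_top_iff)
    then show False using one by simp
  qed
  then obtain r where r: "e = ennreal r" "r \<ge> 0" by (cases e) auto
  have "ennreal (real (q * q * q * q) * r) = 1" using one r
    by (simp add: ennreal_mult' ennreal_of_nat_eq_real_of_nat)
  then have r1: "real (q * q * q * q) * r = 1" using r(2) by (simp add: ennreal_eq_1)
  have Bv: "emeasure \<mu> Bad = ennreal (real (q * q) * r)"
    unfolding bad r by (simp add: ennreal_mult' ennreal_of_nat_eq_real_of_nat)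
  have rq: "real (q * q) * r = 1 / (real q)\<^sup>2"
  proof -
    have "(real q)\<^sup>2 * (real (q * q) * r) = real (q * q * q * q) * r"
      by (simp only: of_nat_mult power2_eq_square mult.assoc)
    also have "\<dots> = 1" by (rule r1)
    finally have h: "(real q)\<^sup>2 * (real (q * q) * r) = 1" .
    have "(real q)\<^sup>2 \<noteq> 0" using qpos by simp
    then show ?thesis using h by (simp add: eq_divide_eq mult.commute)
  qed
  have "emeasure \<mu> (Ploc R w k) = emeasure \<mu> (?V - Bad)" unfolding P_decomp Bad_def ..
  also have "\<dots> = emeasure \<mu> ?V - emeasure \<mu> Bad"
  proof (rule emeasure_Diff)
    show "emeasure \<mu> Bad \<noteq> \<infinity>" using Bv by simp
    show "?V \<in> sets \<mu>" using sp by (metis sets.top)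
    show "Bad \<in> sets \<mu>" by (rule Bad_meas)
    show "Bad \<subseteq> ?V" unfolding Bad_def using Blk_sub BadC_sub by blast
  qed
  also have "\<dots> = ennreal 1 - ennreal (1 / (real q)\<^sup>2)" using tot Bv rq by simp
  also have "\<dots> = ennreal (1 - 1 / (real q)\<^sup>2)" by (rule ennreal_minus) simp
  finally show ?thesis .
qed

end
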